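(* Let $\mathscr{R}_1, \mathscr{R}_2$ be von Neumann algebras acting on a Hilbert space $\mathscr{H}$, and let $\mathcal{S}$ be a family of operators in $\mathscr{R}_1\cap\mathscr{R}_2$. Then $\langle\mathscr{R}_1\mathcal{S}\rangle\cap\mathscr{R}_2 = \langle(\mathscr{R}_1\cap\mathscr{R}_2)\mathcal{S}\rangle$.
   Context: For a von Neumann algebra $\mathscr{R}$ and a family $\mathcal{S}$ of operators in $\mathscr{R}$, $\langle\mathscr{R}\mathcal{S}\rangle$ denotes the smallest left ideal of $\mathscr{R}$ containing $\mathcal{S}$ (generation in the purely algebraic sense; no closure is taken). Note $\mathscr{R}_1\cap\mathscr{R}_2$ is itself a von Neumann algebra. *)

theory Defs
  imports "HOL-Analysis.Analysis"
begin

text \<open>A complex Hilbert space is modelled as a real Banach space (type class banach)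
  together with a complex scalar multiplication sc extending the real one and a
  complex inner product ip (linear in the first argument, as in Kadison--Ringrose)
  inducing the norm.\<close>

definition hilbert_space :: "(complex \<Rightarrow> 'a::banach \<Rightarrow> 'a) \<Rightarrow> ('a \<Rightarrow> 'a \<Rightarrow> complex) \<Rightarrow> bool" where
  "hilbert_space sc ip \<longleftrightarrow>
     (\<forall>r x. sc (complex_of_real r) x = r *\<^sub>R x) \<and>
     (\<forall>a b x. sc (a * b) x = sc a (sc b x)) \<and>
     (\<forall>a b x. sc (a + b) x = sc a x + sc b x) \<and>
     (\<forall>a x y. sc a (x + y) = sc a x + sc a y) \<and>
     (\<forall>x y z. ip (x + y) z = ip x z + ip y z) \<and>
     (\<forall>a x y. ip (sc a x) y = a * ip x y) \<and>
     (\<forall>x y. ip y x = cnj (ip x y)) \<and>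
     (\<forall>x. norm x = sqrt (Re (ip x x)))"

definition bop :: "(complex \<Rightarrow> 'a::banach \<Rightarrow> 'a) \<Rightarrow> ('a \<Rightarrow> 'a) \<Rightarrow> bool" where
  "bop sc T \<longleftrightarrow> bounded_linear T \<and> (\<forall>c x. T (sc c x) = sc c (T x))"

definition is_adjoint :: "('a \<Rightarrow> 'a \<Rightarrow> complex) \<Rightarrow> ('a \<Rightarrow> 'a) \<Rightarrow> ('a \<Rightarrow> 'a) \<Rightarrow> bool" where
  "is_adjoint ip T S \<longleftrightarrow> (\<forall>x y. ip (T x) y = ip x (S y))"

definition wot_closed :: "(complex \<Rightarrow> 'a::banach \<Rightarrow> 'a) \<Rightarrow> ('a \<Rightarrow> 'a \<Rightarrow> complex) \<Rightarrow> ('a \<Rightarrow> 'a) set \<Rightarrow> bool" where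
  "wot_closed sc ip M \<longleftrightarrow>
     (\<forall>T. bop sc T \<and>
          (\<forall>F :: ('a \<times> 'a) set. finite F \<longrightarrow>
             (\<forall>e>0. \<exists>A\<in>M. \<forall>(x, y)\<in>F. cmod (ip (T x) y - ip (A x) y) < e))
        \<longrightarrow> T \<in> M)"

definition von_neumann_algebra :: "(complex \<Rightarrow> 'a::banach \<Rightarrow> 'a) \<Rightarrow> ('a \<Rightarrow> 'a \<Rightarrow> complex) \<Rightarrow> ('a \<Rightarrow> 'a) set \<Rightarrow> bool" where
  "von_neumann_algebra sc ip M \<longleftrightarrow>
     (\<forall>T\<in>M. bop sc T) \<and>
     id \<in> M \<and>
     (\<forall>A\<in>M. \<forall>B\<in>M. (\<lambda>x. A x + B x) \<in> M) \<and>
     (\<forall>A\<in>M. \<forall>c. (\<lambda>x. sc c (A x)) \<in> M) \<and>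
     (\<forall>A\<in>M. \<forall>B\<in>M. A \<circ> B \<in> M) \<and>
     (\<forall>A\<in>M. \<exists>B\<in>M. is_adjoint ip A B) \<and>
     wot_closed sc ip M"

definition left_ideal :: "('a::banach \<Rightarrow> 'a) set \<Rightarrow> ('a \<Rightarrow> 'a) set \<Rightarrow> bool" where
  "left_ideal R J \<longleftrightarrow>
     J \<subseteq> R \<and> (\<lambda>x. 0) \<in> J \<and>
     (\<forall>A\<in>J. \<forall>B\<in>J. (\<lambda>x. A x + B x) \<in> J) \<and>
     (\<forall>A\<in>J. (\<lambda>x. - A x) \<in> J) \<and>
     (\<forall>A\<in>R. \<forall>B\<in>J. A \<circ> B \<in> J)"

text \<open>The smallest left ideal of R containing S (no closure taken).\<close>
definition gen_left_ideal :: "('a::banach \<Rightarrow> 'a) set \<Rightarrow> ('a \<Rightarrow> 'a) set \<Rightarrow> ('a \<Rightarrow> 'a) set" where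
  "gen_left_ideal R S = \<Inter>{J. left_ideal R J \<and> S \<subseteq> J}"

end

theory Submission
  imports Defs
begin

locale hs =
  fixes sc :: "complex \<Rightarrow> 'a::banach \<Rightarrow> 'a" and ip :: "'a \<Rightarrow> 'a \<Rightarrow> complex"
  assumes H: "hilbert_space sc ip"
begin

lemma sc_real: "sc (complex_of_real r) x = r *\<^sub>R x"
  using H unfolding hilbert_space_def by blast
lemma sc_mult: "sc (a * b) x = sc a (sc b x)"
  using H unfolding hilbert_space_def by blast
lemma sc_add_right: "sc a (x + y) = sc a x + sc a y"
  using H unfolding hilbert_space_def by blast
lemma ip_add_left: "ip (x + y) z = ip x z + ip y z"
  using H unfolding hilbert_space_def by blast
lemma ip_sc_left: "ip (sc a x) y = a * ip x y"
  using H unfolding hilbert_space_def by blast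
lemma ip_sym: "ip y x = cnj (ip x y)"
  using H unfolding hilbert_space_def by blast
lemma norm_ip: "norm x = sqrt (Re (ip x x))"
  using H unfolding hilbert_space_def by blast

lemma sc_additive: "Modules.additive (sc a)"
  by (simp add: Modules.additive_def sc_add_right)

lemma sc_zero_right[simp]: "sc a 0 = 0"
  using additive.zero[OF sc_additive] .
lemma sc_minus_right: "sc a (- x) = - sc a x"
  using additive.minus[OF sc_additive] .
lemma sc_diff_right: "sc a (x - y) = sc a x - sc a y"
  using additive.diff[OF sc_additive] .
lemma sc_one[simp]: "sc 1 x = x"
  using sc_real[of 1 x] by simp
lemma sc_zero_left[simp]: "sc 0 x = 0"
  using sc_real[of 0 x] by simp
lemma sc_minus_one: "sc (-1) x = - x"
  using sc_real[of "-1" x] by simp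
lemma sc_scaleR: "sc a (r *\<^sub>R x) = r *\<^sub>R sc a x"
proof -
  have "sc a (r *\<^sub>R x) = sc a (sc (complex_of_real r) x)" by (simp add: sc_real)
  also have "\<dots> = sc (complex_of_real r) (sc a x)" by (simp add: sc_mult[symmetric] mult.commute)
  finally show ?thesis by (simp add: sc_real)
qed

lemma ip_scaleR_left: "ip (r *\<^sub>R x) y = complex_of_real r * ip x y"
  using ip_sc_left[of "complex_of_real r" x y] by (simp add: sc_real)
lemma ip_zero_left[simp]: "ip 0 y = 0"
  using ip_scaleR_left[of 0 0 y] by simp
lemma ip_minus_left: "ip (- x) y = - ip x y"
  using ip_scaleR_left[of "-1" x y] by simp
lemma ip_diff_left: "ip (x - y) z = ip x z - ip y z"
  using ip_add_left[of x "-y" z] by (simp add: ip_minus_left)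
lemma ip_add_right: "ip x (y + z) = ip x y + ip x z"
  by (metis ip_sym ip_add_left complex_cnj_add)
lemma ip_sc_right: "ip x (sc a y) = cnj a * ip x y"
  by (metis ip_sym ip_sc_left complex_cnj_mult)
lemma ip_scaleR_right: "ip x (r *\<^sub>R y) = complex_of_real r * ip x y"
  using ip_sc_right[of x "complex_of_real r" y] by (simp add: sc_real)
lemma ip_zero_right[simp]: "ip x 0 = 0"
  using ip_scaleR_right[of x 0 0] by simp
lemma ip_minus_right: "ip x (- y) = - ip x y"
  using ip_scaleR_right[of x "-1" y] by simp
lemma ip_diff_right: "ip x (y - z) = ip x y - ip x z"
  using ip_add_right[of x y "-z"] by (simp add: ip_minus_right)
lemma ip_sum_left: "ip (\<Sum>i\<in>I. f i) y = (\<Sum>i\<in>I. ip (f i) y)"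
  by (induction I rule: infinite_finite_induct) (auto simp: ip_add_left)
lemma ip_sum_right: "ip y (\<Sum>i\<in>I. f i) = (\<Sum>i\<in>I. ip y (f i))"
  by (induction I rule: infinite_finite_induct) (auto simp: ip_add_right)

lemma ip_self: "ip x x = complex_of_real ((norm x)\<^sup>2)"
proof -
  have im: "Im (ip x x) = 0" using arg_cong[OF ip_sym[of x x], of Im] by simp
  have re: "0 \<le> Re (ip x x)" using norm_ip[of x] norm_ge_zero[of x] real_sqrt_ge_0_iff by metis
  have "(norm x)\<^sup>2 = Re (ip x x)" using norm_ip[of x] re by simp
  thus ?thesis using im by (simp add: complex_eq_iff)
qed

lemma re_ip_self: "Re (ip x x) = (norm x)\<^sup>2"
  by (simp add: ip_self)

lemma ip_expand: "ip (x - sc b y) (x - sc b y) = ip x x - cnj b * ip x y - b * cnj (ip x y) + b * cnj b * ip y y"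
proof -
  have "ip (x - sc b y) (x - sc b y) = ip x x - ip (sc b y) x - (ip x (sc b y) - ip (sc b y) (sc b y))"
    by (simp only: ip_diff_left ip_diff_right)
  also have "\<dots> = ip x x - b * cnj (ip x y) - (cnj b * ip x y - cnj b * (b * ip y y))"
    by (simp only: ip_sc_left ip_sc_right ip_sym[of y x])
  finally show ?thesis by (simp add: algebra_simps)
qed

lemma cauchy_schwarz: "cmod (ip x y) \<le> norm x * norm y"
proof (cases "y = 0")
  case True thus ?thesis by simp
next
  case False
  hence ny: "norm y > 0" by simp
  define a where "a = ip x y"
  define t where "t = 1 / (norm y)\<^sup>2"
  define v where "v = x - sc (complex_of_real t * a) y"
  have ca: "a * cnj a = complex_of_real ((cmod a)\<^sup>2)" by (simp only: complex_norm_square)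
  have "ip v v = ip x x - cnj (complex_of_real t * a) * a - (complex_of_real t * a) * cnj a
      + (complex_of_real t * a) * cnj (complex_of_real t * a) * ip y y"
    unfolding v_def a_def by (rule ip_expand)
  also have "\<dots> = ip x x - 2 * complex_of_real t * (a * cnj a)
      + (complex_of_real t)\<^sup>2 * (a * cnj a) * ip y y"
    by (simp add: algebra_simps power2_eq_square)
  also have "\<dots> = complex_of_real ((norm x)\<^sup>2 - 2 * t * (cmod a)\<^sup>2 + t\<^sup>2 * (cmod a)\<^sup>2 * (norm y)\<^sup>2)"
    unfolding ca ip_self by simp
  finally have eq1: "Re (ip v v) = (norm x)\<^sup>2 - 2 * t * (cmod a)\<^sup>2 + t\<^sup>2 * (cmod a)\<^sup>2 * (norm y)\<^sup>2"
    by simp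
  have ny2: "(norm y)\<^sup>2 > 0" using ny by simp
  have eq2: "t\<^sup>2 * (cmod a)\<^sup>2 * (norm y)\<^sup>2 = t * (cmod a)\<^sup>2"
    using ny2 by (simp add: t_def power2_eq_square)
  have "0 \<le> Re (ip v v)" by (simp add: re_ip_self)
  hence "t * (cmod a)\<^sup>2 \<le> (norm x)\<^sup>2" using eq1 eq2 by linarith
  hence "(cmod a)\<^sup>2 / (norm y)\<^sup>2 \<le> (norm x)\<^sup>2" by (simp add: t_def)
  hence "(cmod a)\<^sup>2 \<le> (norm x)\<^sup>2 * (norm y)\<^sup>2" using ny2 by (simp add: divide_le_eq)
  hence "(cmod a)\<^sup>2 \<le> (norm x * norm y)\<^sup>2" by (simp add: power_mult_distrib)
  thus ?thesis unfolding a_def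
    by (rule power2_le_imp_le) simp
qed

lemma ip_ext: assumes "\<And>z. ip x z = ip y z" shows "x = y"
proof -
  have "ip (x - y) (x - y) = 0" using assms by (simp add: ip_diff_left)
  thus ?thesis by (simp add: ip_self)
qed

lemma norm_sc: "norm (sc c x) = cmod c * norm x"
proof -
  have "complex_of_real ((norm (sc c x))\<^sup>2) = ip (sc c x) (sc c x)" by (simp add: ip_self)
  also have "\<dots> = (c * cnj c) * ip x x" by (simp add: ip_sc_left ip_sc_right mult.commute)
  also have "\<dots> = complex_of_real ((cmod c)\<^sup>2) * complex_of_real ((norm x)\<^sup>2)"
    by (simp only: ip_self complex_norm_square)
  also have "\<dots> = complex_of_real ((cmod c * norm x)\<^sup>2)"
    by (simp only: of_real_mult power_mult_distrib)
  finally have "(norm (sc c x))\<^sup>2 = (cmod c * norm x)\<^sup>2" using of_real_eq_iff by blast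
  thus ?thesis by (simp add: power2_eq_iff_nonneg)
qed

lemma sc_bounded_linear: "bounded_linear (sc c)"
  by (rule bounded_linear_intro[of _ "cmod c"]) (auto simp: sc_add_right sc_scaleR norm_sc)

end

context hs begin

lemma bop_bl: "bop sc T \<Longrightarrow> bounded_linear T"
  by (simp add: bop_def)
lemma bop_sc: "bop sc T \<Longrightarrow> T (sc c x) = sc c (T x)"
  by (simp add: bop_def)
lemma bop_add: "bop sc T \<Longrightarrow> T (x + y) = T x + T y"
  using bop_bl bounded_linear.linear linear_add by blast
lemma bop_diff: "bop sc T \<Longrightarrow> T (x - y) = T x - T y"
  using bop_bl bounded_linear.linear linear_diff by blast
lemma bop_minus: "bop sc T \<Longrightarrow> T (- x) = - T x"
  using bop_bl bounded_linear.linear linear_neg by blast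
lemma bop_zero: "bop sc T \<Longrightarrow> T 0 = 0"
  using bop_bl bounded_linear.linear linear_0 by blast
lemma bop_scaleR: "bop sc T \<Longrightarrow> T (r *\<^sub>R x) = r *\<^sub>R T x"
  using bop_bl bounded_linear.linear linear_scale by blast
lemma bop_sum: "bop sc T \<Longrightarrow> T (\<Sum>i\<in>I. f i) = (\<Sum>i\<in>I. T (f i))"
  using bop_bl bounded_linear.linear linear_sum by blast
lemma bop_bound: "bop sc T \<Longrightarrow> \<exists>K>0. \<forall>x. norm (T x) \<le> norm x * K"
  by (rule bounded_linear.pos_bounded[OF bop_bl])

lemma vna_bop: "von_neumann_algebra sc ip M \<Longrightarrow> T \<in> M \<Longrightarrow> bop sc T"
  by (simp add: von_neumann_algebra_def)
lemma vna_id: "von_neumann_algebra sc ip M \<Longrightarrow> id \<in> M"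
  by (simp add: von_neumann_algebra_def)
lemma vna_add: "von_neumann_algebra sc ip M \<Longrightarrow> A \<in> M \<Longrightarrow> B \<in> M \<Longrightarrow> (\<lambda>x. A x + B x) \<in> M"
  by (simp add: von_neumann_algebra_def)
lemma vna_sc: "von_neumann_algebra sc ip M \<Longrightarrow> A \<in> M \<Longrightarrow> (\<lambda>x. sc c (A x)) \<in> M"
  by (simp add: von_neumann_algebra_def)
lemma vna_comp: "von_neumann_algebra sc ip M \<Longrightarrow> A \<in> M \<Longrightarrow> B \<in> M \<Longrightarrow> A \<circ> B \<in> M"
  by (simp add: von_neumann_algebra_def)
lemma vna_comp': "von_neumann_algebra sc ip M \<Longrightarrow> A \<in> M \<Longrightarrow> B \<in> M \<Longrightarrow> (\<lambda>x. A (B x)) \<in> M"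
  using vna_comp[of M A B] by (simp add: comp_def)
lemma vna_adj: "von_neumann_algebra sc ip M \<Longrightarrow> A \<in> M \<Longrightarrow> \<exists>B\<in>M. is_adjoint ip A B"
  by (simp add: von_neumann_algebra_def)
lemma vna_wot: "von_neumann_algebra sc ip M \<Longrightarrow> wot_closed sc ip M"
  by (simp add: von_neumann_algebra_def)
lemma vna_scaleR: "von_neumann_algebra sc ip M \<Longrightarrow> A \<in> M \<Longrightarrow> (\<lambda>x. r *\<^sub>R A x) \<in> M"
  using vna_sc[of M A "complex_of_real r"] by (simp add: sc_real)
lemma vna_neg: "von_neumann_algebra sc ip M \<Longrightarrow> A \<in> M \<Longrightarrow> (\<lambda>x. - A x) \<in> M"
  using vna_scaleR[of M A "-1"] by simp
lemma vna_diff: "von_neumann_algebra sc ip M \<Longrightarrow> A \<in> M \<Longrightarrow> B \<in> M \<Longrightarrow> (\<lambda>x. A x - B x) \<in> M"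
  using vna_add[of M A "\<lambda>x. - B x"] vna_neg[of M B] by simp
lemma vna_zero: "von_neumann_algebra sc ip M \<Longrightarrow> (\<lambda>x. 0) \<in> M"
  using vna_scaleR[of M id 0] vna_id[of M] by simp
lemma vna_idl: "von_neumann_algebra sc ip M \<Longrightarrow> (\<lambda>x. x) \<in> M"
  using vna_id[of M] by (simp add: id_def)
lemma vna_sum: "von_neumann_algebra sc ip M \<Longrightarrow> (\<And>i. i < (n::nat) \<Longrightarrow> A i \<in> M) \<Longrightarrow> (\<lambda>x. \<Sum>i<n. A i x) \<in> M"
proof (induction n)
  case 0 thus ?case using vna_zero by simp
next
  case (Suc n)
  have "(\<lambda>x. (\<Sum>i<n. A i x) + A n x) \<in> M"
    using Suc by (intro vna_add) auto
  thus ?case by simp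
qed
lemma vna_pow: "von_neumann_algebra sc ip M \<Longrightarrow> A \<in> M \<Longrightarrow> A ^^ k \<in> M"
  by (induction k) (auto simp: vna_id vna_comp)

lemma ip_bl_left: "bounded_linear (\<lambda>v. ip v y)"
proof (rule bounded_linear_intro[of _ "norm y"])
  fix v w show "ip (v + w) y = ip v y + ip w y" by (rule ip_add_left)
  fix r show "ip (r *\<^sub>R v) y = r *\<^sub>R ip v y" by (simp add: ip_scaleR_left scaleR_conv_of_real)
  show "norm (ip v y) \<le> norm v * norm y" using cauchy_schwarz by simp
qed

lemma wot_limit:
  assumes W: "wot_closed sc ip M" and B: "bop sc B" and XM: "\<And>k. X k \<in> M"
    and lim: "\<And>x. (\<lambda>k. X k x) \<longlonglongrightarrow> B x"
  shows "B \<in> M"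
proof -
  have "\<exists>A\<in>M. \<forall>(x, y)\<in>F. cmod (ip (B x) y - ip (A x) y) < e"
    if F: "finite F" and e: "e > 0" for F :: "('a \<times> 'a) set" and e
  proof -
    have "\<forall>\<^sub>F k in sequentially. \<forall>p\<in>F. cmod (ip (B (fst p)) (snd p) - ip (X k (fst p)) (snd p)) < e"
    proof (rule eventually_ball_finite[OF F], rule ballI)
      fix p assume "p \<in> F"
      have "(\<lambda>k. ip (X k (fst p)) (snd p)) \<longlonglongrightarrow> ip (B (fst p)) (snd p)"
        using bounded_linear.tendsto[OF ip_bl_left lim] .
      hence "\<forall>\<^sub>F k in sequentially. dist (ip (X k (fst p)) (snd p)) (ip (B (fst p)) (snd p)) < e"
        using e tendstoD by blast
      thus "\<forall>\<^sub>F k in sequentially. cmod (ip (B (fst p)) (snd p) - ip (X k (fst p)) (snd p)) < e"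
        by (simp add: dist_norm norm_minus_commute)
    qed
    then obtain N where "\<forall>k\<ge>N. \<forall>p\<in>F. cmod (ip (B (fst p)) (snd p) - ip (X k (fst p)) (snd p)) < e"
      by (auto simp: eventually_sequentially)
    hence "\<forall>p\<in>F. cmod (ip (B (fst p)) (snd p) - ip (X N (fst p)) (snd p)) < e" by blast
    thus ?thesis using XM by (intro bexI[of _ "X N"]) auto
  qed
  thus ?thesis using W B unfolding wot_closed_def by blast
qed

lemma bop_limit:
  assumes XB: "\<And>k. bop sc (X k)" and lim: "\<And>x. (\<lambda>k. X k x) \<longlonglongrightarrow> B x"
    and bd: "\<And>k x. norm (X k x) \<le> K * norm x"
  shows "bop sc B"
proof -
  have add: "B (x + y) = B x + B y" for x y
  proof -
    have "(\<lambda>k. X k (x + y)) \<longlonglongrightarrow> B x + B y"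
      using tendsto_add[OF lim[of x] lim[of y]] by (simp add: bop_add[OF XB])
    thus ?thesis using lim[of "x+y"] LIMSEQ_unique by blast
  qed
  have scR: "B (r *\<^sub>R x) = r *\<^sub>R B x" for r x
  proof -
    have "(\<lambda>k. X k (r *\<^sub>R x)) \<longlonglongrightarrow> r *\<^sub>R B x"
      using tendsto_scaleR[OF tendsto_const lim[of x]] by (simp add: bop_scaleR[OF XB])
    thus ?thesis using lim[of "r *\<^sub>R x"] LIMSEQ_unique by blast
  qed
  have scC: "B (sc c x) = sc c (B x)" for c x
  proof -
    have "(\<lambda>k. X k (sc c x)) \<longlonglongrightarrow> sc c (B x)"
      using bounded_linear.tendsto[OF sc_bounded_linear lim[of x]] by (simp add: bop_sc[OF XB])
    thus ?thesis using lim[of "sc c x"] LIMSEQ_unique by blast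
  qed
  have bnd: "norm (B x) \<le> K * norm x" for x
    using tendsto_norm[OF lim[of x]] bd by (intro LIMSEQ_le_const2) auto
  have "bounded_linear B"
    by (rule bounded_linear_intro[of _ K]) (auto simp: add scR bnd mult.commute)
  thus ?thesis using scC by (simp add: bop_def)
qed

end

context hs begin

lemma re_ip_swap: "Re (ip x y) = Re (ip y x)"
  by (subst ip_sym) simp

lemma norm_sq_comb: "(norm (a + s *\<^sub>R b))\<^sup>2 = (norm a)\<^sup>2 + 2 * s * Re (ip a b) + s\<^sup>2 * (norm b)\<^sup>2"
proof -
  have "ip (a + s *\<^sub>R b) (a + s *\<^sub>R b) = ip a a + complex_of_real s * ip a b + complex_of_real s * ip b a
          + complex_of_real s * (complex_of_real s * ip b b)"
    by (simp add: ip_add_left ip_add_right ip_scaleR_left ip_scaleR_right algebra_simps)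
  hence "Re (ip (a + s *\<^sub>R b) (a + s *\<^sub>R b)) = Re (ip a a) + s * Re (ip a b) + s * Re (ip b a) + s * (s * Re (ip b b))"
    by simp
  thus ?thesis by (simp add: re_ip_self re_ip_swap[of b a] power2_eq_square algebra_simps)
qed

lemma neumann:
  assumes M: "von_neumann_algebra sc ip M" and P: "P \<in> M"
    and pos: "\<And>x. 0 \<le> Re (ip (P x) x)"
    and bdP: "\<And>x. (norm (P x))\<^sup>2 \<le> L * Re (ip (P x) x)" and L: "0 \<le> L" and e: "0 < e"
  shows "\<exists>D\<in>M. \<forall>y. P (D y) + e *\<^sub>R D y = y"
proof -
  define c where "c = L + 2 * e"
  define r where "r = 1 - e / c"
  have c: "c > 0" using L e by (simp add: c_def)
  have r0: "0 \<le> r" and r1: "r < 1" using L e c by (auto simp: r_def c_def field_simps)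
  define Y where "Y = (\<lambda>x. x - (1 / c) *\<^sub>R (P x + e *\<^sub>R x))"
  have YM: "Y \<in> M" unfolding Y_def
    by (intro vna_diff vna_scaleR vna_add vna_idl M P)
  have Yb: "bop sc Y" using vna_bop[OF M YM] .
  have Ybd: "norm (Y x) \<le> r * norm x" for x
  proof -
    define p where "p = Re (ip (P x) x)"
    define w where "w = P x + e *\<^sub>R x"
    have p0: "0 \<le> p" using pos by (simp add: p_def)
    have rew: "Re (ip x w) = p + e * (norm x)\<^sup>2"
      by (simp add: w_def ip_add_right ip_scaleR_right re_ip_self p_def re_ip_swap[of x "P x"])
    have nw: "(norm w)\<^sup>2 = (norm (P x))\<^sup>2 + 2 * e * p + e\<^sup>2 * (norm x)\<^sup>2"
      unfolding w_def norm_sq_comb p_def ..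
    have "(norm (Y x))\<^sup>2 = (norm (x + (- (1/c)) *\<^sub>R w))\<^sup>2" by (simp add: Y_def w_def)
    also have "\<dots> = (norm x)\<^sup>2 - 2 * (1/c) * Re (ip x w) + (1/c)\<^sup>2 * (norm w)\<^sup>2"
      unfolding norm_sq_comb by simp
    also have "\<dots> = (norm x)\<^sup>2 - 2 * (1/c) * (p + e * (norm x)\<^sup>2)
        + (1/c)\<^sup>2 * ((norm (P x))\<^sup>2 + 2 * e * p + e\<^sup>2 * (norm x)\<^sup>2)"
      by (simp only: rew nw)
    also have "\<dots> \<le> (norm x)\<^sup>2 - 2 * (1/c) * (p + e * (norm x)\<^sup>2)
        + (1/c)\<^sup>2 * (L * p + 2 * e * p + e\<^sup>2 * (norm x)\<^sup>2)"
      using bdP[of x] by (intro add_left_mono mult_left_mono) (auto simp: p_def)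
    also have "\<dots> = r\<^sup>2 * (norm x)\<^sup>2 - p / c"
    proof -
      have Lc: "L = c - 2 * e" by (simp add: c_def)
      have cn: "c \<noteq> 0" using c by simp
      show ?thesis unfolding r_def Lc using cn
        by (simp add: field_simps power2_eq_square)
    qed
    also have "\<dots> \<le> r\<^sup>2 * (norm x)\<^sup>2" using p0 c by simp
    also have "\<dots> = (r * norm x)\<^sup>2" by (simp add: power_mult_distrib)
    finally have "(norm (Y x))\<^sup>2 \<le> (r * norm x)\<^sup>2" .
    thus ?thesis by (rule power2_le_imp_le) (simp add: r0)
  qed
  have Ypow: "norm ((Y ^^ k) x) \<le> r ^ k * norm x" for k x
  proof (induction k)
    case 0 thus ?case by simp
  next
    case (Suc k)
    have "norm ((Y ^^ Suc k) x) = norm (Y ((Y ^^ k) x))" by simp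
    also have "\<dots> \<le> r * norm ((Y ^^ k) x)" by (rule Ybd)
    also have "\<dots> \<le> r * (r ^ k * norm x)" using Suc r0 by (intro mult_left_mono) auto
    finally show ?case by simp
  qed
  have summ: "summable (\<lambda>k. (Y ^^ k) y)" for y
    by (rule summable_comparison_test'[of "\<lambda>k. r ^ k * norm y" 0])
       (auto intro!: summable_mult2 summable_geometric simp: Ypow r0 r1)
  define D where "D = (\<lambda>y. (1 / c) *\<^sub>R (\<Sum>k. (Y ^^ k) y))"
  define X where "X = (\<lambda>N y. (1 / c) *\<^sub>R (\<Sum>k<N. (Y ^^ k) y))"
  have XM: "X N \<in> M" for N unfolding X_def
    by (intro vna_scaleR vna_sum vna_pow M YM)
  have lim: "(\<lambda>N. X N y) \<longlonglongrightarrow> D y" for y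
    unfolding X_def D_def by (intro tendsto_scaleR tendsto_const summable_LIMSEQ summ)
  have gsum: "(\<Sum>k<N. r ^ k) \<le> 1 / (1 - r)" for N
  proof -
    have "(\<Sum>k<N. r ^ k) \<le> (\<Sum>k. r ^ k)"
      by (rule sum_le_suminf) (auto intro!: summable_geometric simp: r0 r1)
    thus ?thesis using suminf_geometric[of r] r0 r1 by simp
  qed
  have bd: "norm (X N y) \<le> (1 / e) * norm y" for N y
  proof -
    have "norm (\<Sum>k<N. (Y ^^ k) y) \<le> (\<Sum>k<N. norm ((Y ^^ k) y))" by (rule norm_sum)
    also have "\<dots> \<le> (\<Sum>k<N. r ^ k * norm y)" by (intro sum_mono Ypow)
    also have "\<dots> = (\<Sum>k<N. r ^ k) * norm y" by (simp add: sum_distrib_right)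
    also have "\<dots> \<le> 1 / (1 - r) * norm y" by (intro mult_right_mono gsum) simp
    finally have "norm (\<Sum>k<N. (Y ^^ k) y) \<le> 1 / (1 - r) * norm y" .
    hence "norm (X N y) \<le> (1 / c) * (1 / (1 - r) * norm y)"
      using c by (simp add: X_def divide_le_eq)
    also have "(1 / c) * (1 / (1 - r) * norm y) = (1 / e) * norm y"
      using c e by (simp add: r_def field_simps)
    finally show ?thesis .
  qed
  have Db: "bop sc D"
    by (rule bop_limit[of X, OF vna_bop[OF M XM] lim bd])
  have DM: "D \<in> M"
    by (rule wot_limit[OF vna_wot[OF M] Db XM lim])
  have inv: "P (D y) + e *\<^sub>R D y = y" for y
  proof -
    have cv: "P v + e *\<^sub>R v = c *\<^sub>R (v - Y v)" for v
      using c by (simp add: Y_def)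
    have "Y (\<Sum>k. (Y ^^ k) y) = (\<Sum>k. Y ((Y ^^ k) y))"
      by (rule bounded_linear.suminf[OF bop_bl[OF Yb] summ])
    also have "\<dots> = (\<Sum>k. (Y ^^ Suc k) y)" by simp
    also have "\<dots> = (\<Sum>k. (Y ^^ k) y) - y"
      using suminf_split_head[OF summ[of y]] by simp
    finally have YS: "Y (\<Sum>k. (Y ^^ k) y) = (\<Sum>k. (Y ^^ k) y) - y" .
    have "Y (D y) = (1 / c) *\<^sub>R Y (\<Sum>k. (Y ^^ k) y)"
      unfolding D_def by (rule bop_scaleR[OF Yb])
    hence "D y - Y (D y) = (1 / c) *\<^sub>R y"
      by (simp add: YS D_def scaleR_diff_right)
    thus ?thesis using cv[of "D y"] c by simp
  qed
  show ?thesis using DM inv by blast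
qed

end

lemma sum_sqrt_bound:
  fixes C :: "nat \<Rightarrow> 'a::real_normed_vector \<Rightarrow> 'b::real_normed_vector"
  assumes C: "\<And>i v. i < n \<Longrightarrow> norm (C i v) \<le> norm v * k i" and k: "\<And>i. i < n \<Longrightarrow> 0 \<le> k i"
  shows "norm (\<Sum>i<n. C i (u i)) \<le> (\<Sum>i<n. k i) * sqrt (\<Sum>i<n. (norm (u i))\<^sup>2)"
proof -
  let ?S = "sqrt (\<Sum>i<n. (norm (u i))\<^sup>2)"
  have u: "norm (u i) \<le> ?S" if "i < n" for i
  proof (rule real_le_rsqrt)
    show "(norm (u i))\<^sup>2 \<le> (\<Sum>i<n. (norm (u i))\<^sup>2)"
      using that by (intro member_le_sum) auto
  qed
  have "norm (\<Sum>i<n. C i (u i)) \<le> (\<Sum>i<n. norm (C i (u i)))" by (rule norm_sum)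
  also have "\<dots> \<le> (\<Sum>i<n. norm (u i) * k i)" by (intro sum_mono C) simp
  also have "\<dots> \<le> (\<Sum>i<n. ?S * k i)" by (intro sum_mono mult_right_mono u k) auto
  also have "\<dots> = (\<Sum>i<n. k i) * ?S" by (simp add: sum_distrib_right mult.commute)
  finally show ?thesis .
qed

lemma sq_le_imp: "(t::real) \<ge> 0 \<Longrightarrow> Y \<ge> 0 \<Longrightarrow> t\<^sup>2 \<le> t * Y \<Longrightarrow> t \<le> Y"
  by (cases "t = 0") (auto simp: power2_eq_square)


locale ctx = hs +
  fixes M :: "('a::banach \<Rightarrow> 'a) set" and n :: nat and s s' A :: "nat \<Rightarrow> 'a \<Rightarrow> 'a"
  assumes M: "von_neumann_algebra sc ip M"
    and sM: "\<And>i. i < n \<Longrightarrow> s i \<in> M" and s'M: "\<And>i. i < n \<Longrightarrow> s' i \<in> M"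
    and adj: "\<And>i. i < n \<Longrightarrow> is_adjoint ip (s i) (s' i)"
    and Ab: "\<And>i. i < n \<Longrightarrow> bop sc (A i)"
    and TM: "(\<lambda>x. \<Sum>i<n. A i (s i x)) \<in> M"
begin

definition "T = (\<lambda>x. \<Sum>i<n. A i (s i x))"
definition "P = (\<lambda>x. \<Sum>i<n. s' i (s i x))"
definition "q x = (\<Sum>i<n. (norm (s i x))\<^sup>2)"
definition "G x y = (\<Sum>i<n. ip (s i x) (s i y))"

lemma TM': "T \<in> M" using TM by (simp add: T_def)
lemma Tb: "bop sc T" using vna_bop[OF M TM'] .
lemma sb: "i < n \<Longrightarrow> bop sc (s i)" using vna_bop[OF M sM] .
lemma PM: "P \<in> M"
proof -
  have "\<And>i. i < n \<Longrightarrow> (\<lambda>x. s' i (s i x)) \<in> M" using vna_comp'[OF M s'M sM] by blast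
  thus ?thesis unfolding P_def by (rule vna_sum[OF M])
qed
lemma Pb: "bop sc P" using vna_bop[OF M PM] .

lemma adjL: "i < n \<Longrightarrow> ip (s i x) y = ip x (s' i y)"
  using adj by (simp add: is_adjoint_def)
lemma adjR: "i < n \<Longrightarrow> ip (s' i x) y = ip x (s i y)"
proof -
  assume i: "i < n"
  have "ip (s' i x) y = cnj (ip y (s' i x))" by (rule ip_sym)
  also have "\<dots> = cnj (ip (s i y) x)" using adjL[OF i] by simp
  also have "\<dots> = ip x (s i y)" by (rule ip_sym[symmetric])
  finally show ?thesis .
qed

lemma ipP: "ip (P x) y = G x y"
  unfolding P_def G_def ip_sum_left by (intro sum.cong refl) (simp add: adjR)
lemma ipP': "ip x (P y) = G x y"
proof -
  have "ip x (P y) = cnj (ip (P y) x)" by (rule ip_sym)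
  also have "\<dots> = cnj (G y x)" by (simp add: ipP)
  also have "\<dots> = G x y" unfolding G_def cnj_sum by (intro sum.cong refl) (rule ip_sym[symmetric])
  finally show ?thesis .
qed
lemma ReG: "Re (G x x) = q x"
  unfolding G_def q_def by (simp add: re_ip_self)
lemma ReP: "Re (ip (P x) x) = q x" by (simp add: ipP ReG)
lemma ReP': "Re (ip x (P x)) = q x" by (simp add: ipP' ReG)
lemma q_nonneg: "0 \<le> q x" unfolding q_def by (intro sum_nonneg) simp
lemma sq_le_q: "i < n \<Longrightarrow> (norm (s i x))\<^sup>2 \<le> q x"
  unfolding q_def by (intro member_le_sum) auto
lemma s_le_q: "i < n \<Longrightarrow> norm (s i x) \<le> sqrt (q x)"
  by (rule real_le_rsqrt) (rule sq_le_q)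
lemma q_scaleR: "q (r *\<^sub>R x) = r\<^sup>2 * q x"
  unfolding q_def by (simp add: sum_distrib_left bop_scaleR[OF sb] power_mult_distrib)

lemma T_bound: "\<exists>K\<ge>0. \<forall>x. norm (T x) \<le> K * sqrt (q x)"
proof -
  have "\<forall>i. \<exists>k. i < n \<longrightarrow> (k > 0 \<and> (\<forall>v. norm (A i v) \<le> norm v * k))"
    using bop_bound[OF Ab] by blast
  then obtain k where k: "\<And>i. i < n \<Longrightarrow> k i > 0 \<and> (\<forall>v. norm (A i v) \<le> norm v * k i)"
    using choice[of "\<lambda>i k. i < n \<longrightarrow> (k > 0 \<and> (\<forall>v. norm (A i v) \<le> norm v * k))"] by blast
  have "norm (T x) \<le> (\<Sum>i<n. k i) * sqrt (q x)" for x
    unfolding T_def q_def by (rule sum_sqrt_bound) (use k less_imp_le in auto)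
  moreover have "0 \<le> (\<Sum>i<n. k i)" using k by (intro sum_nonneg) (simp add: less_imp_le)
  ultimately show ?thesis by blast
qed

lemma P_bound: "\<exists>L\<ge>0. \<forall>x. (norm (P x))\<^sup>2 \<le> L * q x"
proof -
  have "\<forall>i. \<exists>k. i < n \<longrightarrow> (k > 0 \<and> (\<forall>v. norm (s' i v) \<le> norm v * k))"
    using bop_bound[OF vna_bop[OF M s'M]] by blast
  then obtain k where k: "\<And>i. i < n \<Longrightarrow> k i > 0 \<and> (\<forall>v. norm (s' i v) \<le> norm v * k i)"
    using choice[of "\<lambda>i k. i < n \<longrightarrow> (k > 0 \<and> (\<forall>v. norm (s' i v) \<le> norm v * k))"] by blast
  define K where "K = (\<Sum>i<n. k i)"
  have K0: "0 \<le> K" using k unfolding K_def by (intro sum_nonneg) (simp add: less_imp_le)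
  have b: "norm (P x) \<le> K * sqrt (q x)" for x
    unfolding P_def q_def K_def by (rule sum_sqrt_bound) (use k less_imp_le in auto)
  have "(norm (P x))\<^sup>2 \<le> K\<^sup>2 * q x" for x
  proof -
    have "(norm (P x))\<^sup>2 \<le> (K * sqrt (q x))\<^sup>2" using b[of x] by (intro power_mono) auto
    thus ?thesis using q_nonneg[of x] by (simp add: power_mult_distrib)
  qed
  thus ?thesis by (intro exI[of _ "K\<^sup>2"]) auto
qed

lemma P_inj: assumes e: "e > 0" and eq: "P a + e *\<^sub>R a = P b + e *\<^sub>R b" shows "a = b"
proof -
  define d where "d = a - b"
  have "P d + e *\<^sub>R d = 0" using eq by (simp add: d_def bop_diff[OF Pb] scaleR_diff_right algebra_simps)
  hence "Re (ip (P d + e *\<^sub>R d) d) = 0" by simp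
  hence "q d + e * (norm d)\<^sup>2 = 0" by (simp add: ip_add_left ip_scaleR_left ReP re_ip_self)
  moreover have "0 \<le> e * (norm d)\<^sup>2" using e by simp
  ultimately have "e * (norm d)\<^sup>2 = 0" using q_nonneg[of d] by linarith
  thus ?thesis using e by (simp add: d_def)
qed

lemma ip_z_w: "Re (ip z (P z + e *\<^sub>R z)) = q z + e * (norm z)\<^sup>2"
  by (simp add: ip_add_right ip_scaleR_right ReP' re_ip_self)

definition "ee k = inverse (real (Suc k))"
definition "D k = (SOME D. D \<in> M \<and> (\<forall>y. P (D y) + ee k *\<^sub>R D y = y))"

lemma ee_pos: "ee k > 0" by (simp add: ee_def)
lemma ee_mono: "j \<le> k \<Longrightarrow> ee k \<le> ee j" unfolding ee_def by (rule le_imp_inverse_le) auto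

lemma D_props: "D k \<in> M \<and> (\<forall>y. P (D k y) + ee k *\<^sub>R D k y = y)"
proof -
  obtain L where L: "L \<ge> 0" "\<And>x. (norm (P x))\<^sup>2 \<le> L * q x" using P_bound by blast
  have "\<exists>D\<in>M. \<forall>y. P (D y) + ee k *\<^sub>R D y = y"
  proof (rule neumann[OF M PM _ _ L(1) ee_pos])
    show "0 \<le> Re (ip (P x) x)" for x by (simp add: ReP q_nonneg)
    show "(norm (P x))\<^sup>2 \<le> L * Re (ip (P x) x)" for x by (simp add: ReP L(2))
  qed
  hence "\<exists>D. D \<in> M \<and> (\<forall>y. P (D y) + ee k *\<^sub>R D y = y)" by blast
  thus ?thesis unfolding D_def by (rule someI_ex)
qed
lemma DM: "D k \<in> M" using D_props by blast
lemma Db: "bop sc (D k)" using vna_bop[OF M DM] .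
lemma D_inv: "P (D k y) + ee k *\<^sub>R D k y = y" using D_props by blast
lemma D_left: "D k (P v + ee k *\<^sub>R v) = v"
  by (rule P_inj[OF ee_pos[of k]]) (simp add: D_inv)

end


context ctx begin

definition "KT = (SOME K. K \<ge> 0 \<and> (\<forall>x. norm (T x) \<le> K * sqrt (q x)))"
lemma KT: "KT \<ge> 0 \<and> (\<forall>x. norm (T x) \<le> KT * sqrt (q x))"
  unfolding KT_def using T_bound by (rule someI_ex[where P = "\<lambda>K. K \<ge> 0 \<and> (\<forall>x. norm (T x) \<le> K * sqrt (q x))"])
lemma KT0: "KT \<ge> 0" using KT by blast
lemma KT_bd: "norm (T x) \<le> KT * sqrt (q x)" using KT by blast

definition "Aw w k = Re (ip (D k w) w)"

lemma Aw_eq: "Aw w k = q (D k w) + ee k * (norm (D k w))\<^sup>2"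
proof -
  have "Aw w k = Re (ip (D k w) (P (D k w) + ee k *\<^sub>R D k w))" by (simp add: Aw_def D_inv)
  also have "\<dots> = q (D k w) + ee k * (norm (D k w))\<^sup>2" by (rule ip_z_w)
  finally show ?thesis .
qed
lemma Aw_nonneg: "0 \<le> Aw w k"
  unfolding Aw_eq using q_nonneg ee_pos by (simp add: add_nonneg_nonneg less_imp_le)

lemma Aw_step:
  assumes jk: "j \<le> k"
  shows "q (D k w - D j w) \<le> Aw w k - Aw w j"
proof -
  define d where "d = ee k"
  define e where "e = ee j"
  have de: "d \<le> e" using ee_mono[OF jk] by (simp add: d_def e_def)
  have d0: "0 < d" using ee_pos by (simp add: d_def)
  define ze where "ze = D j w"
  define z where "z = D k ze"
  have hz: "P z + d *\<^sub>R z = ze" by (simp add: z_def d_def D_inv)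
  have hw: "P ze + e *\<^sub>R ze = w" by (simp add: ze_def e_def D_inv)
  define v where "v = P z + e *\<^sub>R z"
  have Pv: "P v + d *\<^sub>R v = P (P z) + (e + d) *\<^sub>R P z + (e * d) *\<^sub>R z"
    by (simp add: v_def bop_add[OF Pb] bop_scaleR[OF Pb] scaleR_add_right scaleR_add_left algebra_simps)
  have wexp: "w = P (P z) + (e + d) *\<^sub>R P z + (e * d) *\<^sub>R z"
    unfolding hw[symmetric] hz[symmetric]
    by (simp add: bop_add[OF Pb] bop_scaleR[OF Pb] scaleR_add_right scaleR_add_left algebra_simps)
  have Dkw: "D k w = v"
    using D_left[of k v] Pv wexp by (simp add: d_def)
  have u: "D k w - D j w = (e - d) *\<^sub>R z"
    by (simp add: Dkw v_def ze_def[symmetric] hz[symmetric] scaleR_diff_left)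
  have "Aw w k - Aw w j = Re (ip (D k w - D j w) w)"
    by (simp add: Aw_def ip_diff_left)
  also have "\<dots> = (e - d) * Re (ip z w)" by (simp add: u ip_scaleR_left)
  also have "Re (ip z w) = (norm (P z))\<^sup>2 + (e + d) * q z + (e * d) * (norm z)\<^sup>2"
  proof -
    have pp: "ip z (P (P z)) = ip (P z) (P z)" by (simp only: ipP'[of z "P z"] ipP[of z "P z", symmetric])
    show ?thesis unfolding wexp
      by (simp add: ip_add_right ip_scaleR_right pp re_ip_self ReP')
  qed
  finally have eq: "Aw w k - Aw w j = (e - d) * ((norm (P z))\<^sup>2 + (e + d) * q z + (e * d) * (norm z)\<^sup>2)" .
  have "q (D k w - D j w) = (e - d) * ((e - d) * q z)" by (simp add: u q_scaleR power2_eq_square)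
  also have "\<dots> \<le> (e - d) * ((norm (P z))\<^sup>2 + (e + d) * q z + (e * d) * (norm z)\<^sup>2)"
  proof (rule mult_left_mono)
    have "(e - d) * q z \<le> (e + d) * q z" using d0 q_nonneg[of z] by (intro mult_right_mono) auto
    moreover have "0 \<le> (norm (P z))\<^sup>2 + (e * d) * (norm z)\<^sup>2" using d0 de by simp
    ultimately show "(e - d) * q z \<le> (norm (P z))\<^sup>2 + (e + d) * q z + (e * d) * (norm z)\<^sup>2" by linarith
    show "0 \<le> e - d" using de by simp
  qed
  finally show ?thesis using eq by simp
qed

lemma Aw_mono: "j \<le> k \<Longrightarrow> Aw w j \<le> Aw w k"
  using Aw_step[of j k w] q_nonneg[of "D k w - D j w"] by linarith

lemma T_diff_bd: "norm (T (D m w) - T (D l w)) \<le> KT * sqrt \<bar>Aw w m - Aw w l\<bar>"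
proof (cases "l \<le> m")
  case True
  have "norm (T (D m w) - T (D l w)) = norm (T (D m w - D l w))" by (simp add: bop_diff[OF Tb])
  also have "\<dots> \<le> KT * sqrt (q (D m w - D l w))" by (rule KT_bd)
  also have "\<dots> \<le> KT * sqrt \<bar>Aw w m - Aw w l\<bar>"
    using Aw_step[OF True, of w] KT0 by (intro mult_left_mono real_sqrt_le_mono) auto
  finally show ?thesis .
next
  case False
  hence ml: "m \<le> l" by simp
  have "norm (T (D m w) - T (D l w)) = norm (T (D l w - D m w))"
    by (simp add: bop_diff[OF Tb] norm_minus_commute)
  also have "\<dots> \<le> KT * sqrt (q (D l w - D m w))" by (rule KT_bd)
  also have "\<dots> \<le> KT * sqrt \<bar>Aw w m - Aw w l\<bar>"
    using Aw_step[OF ml, of w] KT0 by (intro mult_left_mono real_sqrt_le_mono) auto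
  finally show ?thesis .
qed

lemma T_cauchy:
  assumes bnd: "\<And>k. Aw w k \<le> Bd"
  shows "Cauchy (\<lambda>k. T (D k w))"
proof -
  have "Bseq (Aw w)"
  proof (rule BseqI')
    fix k show "norm (Aw w k) \<le> Bd" using bnd[of k] Aw_nonneg[of w k] by simp
  qed
  hence "convergent (Aw w)" using Aw_mono by (intro Bseq_mono_convergent) auto
  hence CA: "Cauchy (Aw w)" by (rule convergent_Cauchy)
  show ?thesis
  proof (rule CauchyI)
    fix e :: real assume e: "0 < e"
    define eta where "eta = e / (KT + 1)"
    have eta: "0 < eta" using e KT0 by (simp add: eta_def)
    obtain N where N: "\<forall>m\<ge>N. \<forall>l\<ge>N. norm (Aw w m - Aw w l) < eta\<^sup>2"
      using CauchyD[OF CA, of "eta\<^sup>2"] eta by auto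
    have "\<forall>m\<ge>N. \<forall>l\<ge>N. norm (T (D m w) - T (D l w)) < e"
    proof (intro allI impI)
      fix m l assume "m \<ge> N" "l \<ge> N"
      hence lt: "\<bar>Aw w m - Aw w l\<bar> < eta\<^sup>2" using N by auto
      have "sqrt \<bar>Aw w m - Aw w l\<bar> < sqrt (eta\<^sup>2)" using lt by (rule real_sqrt_less_mono)
      hence s: "sqrt \<bar>Aw w m - Aw w l\<bar> < eta" using eta by simp
      have "norm (T (D m w) - T (D l w)) \<le> KT * sqrt \<bar>Aw w m - Aw w l\<bar>" by (rule T_diff_bd)
      also have "\<dots> \<le> KT * eta" using s KT0 by (intro mult_left_mono) auto
      also have "\<dots> < e"
      proof -
        have "KT * eta = e * (KT / (KT + 1))" using KT0 by (simp add: eta_def field_simps)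
        also have "\<dots> < e * 1" using e KT0 by (intro mult_strict_left_mono) auto
        finally show ?thesis by simp
      qed
      finally show "norm (T (D m w) - T (D l w)) < e" .
    qed
    thus "\<exists>M. \<forall>m\<ge>M. \<forall>n\<ge>M. norm (T (D m w) - T (D n w)) < e" by blast
  qed
qed

lemma Aw_adj_bound:
  assumes i: "i < n"
  shows "q (D k (s' i y)) \<le> (norm y)\<^sup>2 \<and> Aw (s' i y) k \<le> (norm y)\<^sup>2"
proof -
  define w where "w = s' i y"
  define z where "z = D k w"
  define t where "t = sqrt (q z)"
  have t0: "0 \<le> t" using q_nonneg[of z] by (simp add: t_def)
  have tq: "t\<^sup>2 = q z" using q_nonneg[of z] by (simp add: t_def)
  have A1: "Aw w k = q z + ee k * (norm z)\<^sup>2" by (simp add: Aw_eq z_def)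
  have "Aw w k = Re (ip (s i z) y)" by (simp add: Aw_def z_def w_def adjL[OF i])
  also have "\<dots> \<le> cmod (ip (s i z) y)" by (rule complex_Re_le_cmod)
  also have "\<dots> \<le> norm (s i z) * norm y" by (rule cauchy_schwarz)
  also have "\<dots> \<le> t * norm y" unfolding t_def by (intro mult_right_mono s_le_q i) simp
  finally have A2: "Aw w k \<le> t * norm y" .
  have "0 \<le> ee k * (norm z)\<^sup>2" using ee_pos[of k] by simp
  hence tt: "t\<^sup>2 \<le> t * norm y" using A1 A2 tq by linarith
  have ty: "t \<le> norm y" by (rule sq_le_imp[OF t0 norm_ge_zero tt])
  have "q z \<le> (norm y)\<^sup>2" unfolding tq[symmetric] using ty t0 by (intro power_mono) auto
  moreover have "Aw w k \<le> (norm y)\<^sup>2"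
  proof -
    have "t * norm y \<le> norm y * norm y" using ty by (intro mult_right_mono) auto
    thus ?thesis using A2 by (simp add: power2_eq_square)
  qed
  ultimately show ?thesis by (simp add: z_def w_def)
qed

definition "Xo i k = (\<lambda>y. T (D k (s' i y)))"
definition "Bo i = (\<lambda>y. lim (\<lambda>k. Xo i k y))"

lemma XoM: "i < n \<Longrightarrow> Xo i k \<in> M"
proof -
  assume i: "i < n"
  have "(\<lambda>y. D k (s' i y)) \<in> M" by (rule vna_comp'[OF M DM s'M[OF i]])
  thus ?thesis unfolding Xo_def by (rule vna_comp'[OF M TM'])
qed

lemma Xo_lim: "i < n \<Longrightarrow> (\<lambda>k. Xo i k y) \<longlonglongrightarrow> Bo i y"
proof -
  assume i: "i < n"
  have "Cauchy (\<lambda>k. T (D k (s' i y)))"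
    by (rule T_cauchy[of _ "(norm y)\<^sup>2"]) (use Aw_adj_bound[OF i] in blast)
  hence "convergent (\<lambda>k. Xo i k y)" by (simp add: Xo_def Cauchy_convergent_iff)
  thus ?thesis unfolding Bo_def by (simp add: convergent_LIMSEQ_iff)
qed

lemma Xo_bd: "i < n \<Longrightarrow> norm (Xo i k y) \<le> KT * norm y"
proof -
  assume i: "i < n"
  have "norm (Xo i k y) \<le> KT * sqrt (q (D k (s' i y)))" unfolding Xo_def by (rule KT_bd)
  also have "\<dots> \<le> KT * sqrt ((norm y)\<^sup>2)"
    using Aw_adj_bound[OF i, of k y] KT0 by (intro mult_left_mono real_sqrt_le_mono) auto
  finally show ?thesis by simp
qed

lemma BoM: "i < n \<Longrightarrow> Bo i \<in> M"
proof -
  assume i: "i < n"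
  have b: "bop sc (Bo i)"
    by (rule bop_limit[of "Xo i" _ KT]) (use vna_bop[OF M XoM[OF i]] Xo_lim[OF i] Xo_bd[OF i] in auto)
  show ?thesis by (rule wot_limit[OF vna_wot[OF M] b XoM[OF i] Xo_lim[OF i]])
qed

lemma ee_lim: "(\<lambda>k. ee k) \<longlonglongrightarrow> 0"
  unfolding ee_def by (rule LIMSEQ_inverse_real_of_nat)

lemma small_bd: "norm (ee k *\<^sub>R T (D k x)) \<le> KT * (sqrt (ee k) * norm x)"
proof -
  define d where "d = ee k"
  define z where "z = D k x"
  have d0: "0 < d" by (simp add: d_def ee_pos)
  have "q z + d * (norm z)\<^sup>2 = Re (ip z x)"
    using ip_z_w[of z d] D_inv[of k x] by (simp add: z_def d_def)
  also have "\<dots> \<le> norm z * norm x"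
    using cauchy_schwarz[of z x] complex_Re_le_cmod[of "ip z x"] by linarith
  finally have h: "q z + d * (norm z)\<^sup>2 \<le> norm z * norm x" .
  have "4 * d * (norm z * norm x - d * (norm z)\<^sup>2) \<le> (norm x)\<^sup>2"
  proof -
    have "0 \<le> (norm x - 2 * d * norm z)\<^sup>2" by simp
    thus ?thesis by (simp add: power2_eq_square algebra_simps)
  qed
  moreover have "4 * d * q z \<le> 4 * d * (norm z * norm x - d * (norm z)\<^sup>2)"
    using h d0 by (intro mult_left_mono) auto
  ultimately have "4 * d * q z \<le> (norm x)\<^sup>2" by linarith
  moreover have "0 \<le> d * q z" using d0 q_nonneg[of z] by simp
  ultimately have "d * q z \<le> (norm x)\<^sup>2" by linarith
  hence dq: "d * (d * q z) \<le> d * (norm x)\<^sup>2" using d0 by (intro mult_left_mono) auto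
  have "d * sqrt (q z) = sqrt (d * (d * q z))" using d0 q_nonneg[of z]
    by (simp add: real_sqrt_mult)
  also have "\<dots> \<le> sqrt (d * (norm x)\<^sup>2)" using dq by (rule real_sqrt_le_mono)
  also have "\<dots> = sqrt d * norm x" by (simp add: real_sqrt_mult)
  finally have ds: "d * sqrt (q z) \<le> sqrt d * norm x" .
  have "norm (d *\<^sub>R T z) = d * norm (T z)" using d0 by simp
  also have "\<dots> \<le> d * (KT * sqrt (q z))" using d0 KT_bd[of z] by (intro mult_left_mono) auto
  also have "\<dots> = KT * (d * sqrt (q z))" by simp
  also have "\<dots> \<le> KT * (sqrt d * norm x)" using ds KT0 by (intro mult_left_mono)
  finally show ?thesis by (simp add: d_def z_def)
qed

lemma main_ctx: "T = (\<lambda>x. \<Sum>i<n. Bo i (s i x))"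
proof
  fix x
  have seq: "(\<Sum>i<n. Xo i k (s i x)) = T x - ee k *\<^sub>R T (D k x)" for k
  proof -
    have "(\<Sum>i<n. Xo i k (s i x)) = T (D k (P x))"
      by (simp add: Xo_def P_def bop_sum[OF Db] bop_sum[OF Tb])
    also have "D k (P x) = x - ee k *\<^sub>R D k x"
    proof -
      have "P (x - ee k *\<^sub>R D k x) + ee k *\<^sub>R (x - ee k *\<^sub>R D k x)
          = P x + ee k *\<^sub>R x - ee k *\<^sub>R (P (D k x) + ee k *\<^sub>R D k x)"
        by (simp add: bop_diff[OF Pb] bop_scaleR[OF Pb] algebra_simps)
      also have "\<dots> = P x" by (simp add: D_inv)
      finally have "P (x - ee k *\<^sub>R D k x) + ee k *\<^sub>R (x - ee k *\<^sub>R D k x) = P x" .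
      thus ?thesis using D_left[of k "x - ee k *\<^sub>R D k x"] by simp
    qed
    finally show ?thesis by (simp add: bop_diff[OF Tb] bop_scaleR[OF Tb])
  qed
  have l1: "(\<lambda>k. \<Sum>i<n. Xo i k (s i x)) \<longlonglongrightarrow> (\<Sum>i<n. Bo i (s i x))"
    by (rule tendsto_sum) (simp add: Xo_lim)
  have z: "(\<lambda>k. ee k *\<^sub>R T (D k x)) \<longlonglongrightarrow> 0"
  proof (rule Lim_null_comparison)
    show "\<forall>\<^sub>F k in sequentially. norm (ee k *\<^sub>R T (D k x)) \<le> KT * (sqrt (ee k) * norm x)"
      by (rule always_eventually, rule allI, rule small_bd)
    have "(\<lambda>k. KT * (sqrt (ee k) * norm x)) \<longlonglongrightarrow> KT * (sqrt 0 * norm x)"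
      by (intro tendsto_mult tendsto_const tendsto_real_sqrt ee_lim)
    thus "(\<lambda>k. KT * (sqrt (ee k) * norm x)) \<longlonglongrightarrow> 0" by simp
  qed
  have l2: "(\<lambda>k. \<Sum>i<n. Xo i k (s i x)) \<longlonglongrightarrow> T x"
    unfolding seq using tendsto_diff[OF tendsto_const z, of "T x"] by simp
  show "T x = (\<Sum>i<n. Bo i (s i x))" using LIMSEQ_unique[OF l2 l1] .
qed

lemma main_exists: "\<exists>B. (\<forall>i<n. B i \<in> M) \<and> (\<lambda>x. \<Sum>i<n. A i (s i x)) = (\<lambda>x. \<Sum>i<n. B i (s i x))"
  using main_ctx BoM unfolding T_def by blast

end


inductive_set gen :: "('a::banach \<Rightarrow> 'a) set \<Rightarrow> ('a \<Rightarrow> 'a) set \<Rightarrow> ('a \<Rightarrow> 'a) set"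
  for R S where
  gen0: "(\<lambda>x. 0) \<in> gen R S"
| genS: "A \<in> R \<Longrightarrow> s \<in> S \<Longrightarrow> T \<in> gen R S \<Longrightarrow> (\<lambda>x. A (s x) + T x) \<in> gen R S"

lemma gen_le_ideal:
  assumes J: "left_ideal R J" and SJ: "S \<subseteq> J"
  shows "gen R S \<subseteq> J"
proof
  fix T assume "T \<in> gen R S"
  thus "T \<in> J"
  proof (induction rule: gen.induct)
    case gen0 thus ?case using J by (simp add: left_ideal_def)
  next
    case (genS A s T)
    have "A \<circ> s \<in> J" using J genS SJ by (auto simp: left_ideal_def)
    hence "(\<lambda>x. (A \<circ> s) x + T x) \<in> J" using J genS.IH unfolding left_ideal_def by blast
    thus ?case by (simp add: comp_def)
  qed
qed

lemma gen_mono: assumes RR: "R \<subseteq> R'" shows "T \<in> gen R S \<Longrightarrow> T \<in> gen R' S"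
proof (induction rule: gen.induct)
  case gen0 thus ?case by (rule gen.gen0)
next
  case (genS A s T) show ?case by (rule gen.genS[of A R' s S T]) (use genS RR in auto)
qed

lemma gen_to_sum:
  "T \<in> gen R S \<Longrightarrow> \<exists>(n::nat) A s. (\<forall>i<n. A i \<in> R \<and> s i \<in> S) \<and> T = (\<lambda>x. \<Sum>i<n. A i (s i x))"
proof (induction rule: gen.induct)
  case gen0 show ?case
    by (rule exI[where x = "0::nat"], rule exI[where x = "\<lambda>i. (\<lambda>x. x)"], rule exI[where x = "\<lambda>i. (\<lambda>x. x)"]) simp
next
  case (genS A0 s0 T)
  then obtain n :: nat and A s where h: "\<forall>i<n. A i \<in> R \<and> s i \<in> S" and T: "T = (\<lambda>x. \<Sum>i<n. A i (s i x))"
    by blast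
  define A' where "A' = A(n := A0)"
  define s' where "s' = s(n := s0)"
  have "\<forall>i<Suc n. A' i \<in> R \<and> s' i \<in> S" using h genS by (auto simp: A'_def s'_def less_Suc_eq)
  moreover have "(\<lambda>x. A0 (s0 x) + T x) = (\<lambda>x. \<Sum>i<Suc n. A' i (s' i x))"
  proof
    fix x
    have "(\<Sum>i<n. A' i (s' i x)) = (\<Sum>i<n. A i (s i x))"
      by (intro sum.cong) (auto simp: A'_def s'_def)
    thus "A0 (s0 x) + T x = (\<Sum>i<Suc n. A' i (s' i x))"
      by (simp add: T A'_def s'_def add.commute)
  qed
  ultimately show ?case by blast
qed

lemma sum_in_gen:
  "(\<forall>i<(n::nat). B i \<in> R \<and> s i \<in> S) \<Longrightarrow> (\<lambda>x. \<Sum>i<n. B i (s i x)) \<in> gen R S"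
proof (induction n)
  case 0 thus ?case by (simp add: gen0)
next
  case (Suc n)
  have "(\<lambda>x. B n (s n x) + (\<Sum>i<n. B i (s i x))) \<in> gen R S"
    using Suc by (intro genS) auto
  thus ?case by (simp add: add.commute)
qed

context hs begin

lemma gen_sub': assumes M: "von_neumann_algebra sc ip R" and SR: "S \<subseteq> R"
  shows "T \<in> gen R S \<Longrightarrow> T \<in> R"
proof (induction rule: gen.induct)
  case gen0 show ?case using vna_zero[OF M] by simp
next
  case (genS A s T)
  have "(\<lambda>x. A (s x)) \<in> R" using genS SR by (intro vna_comp'[OF M, of A s]) auto
  thus ?case using genS vna_add[OF M, of "\<lambda>x. A (s x)" T] by simp
qed
lemma gen_sub: "von_neumann_algebra sc ip R \<Longrightarrow> S \<subseteq> R \<Longrightarrow> gen R S \<subseteq> R"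
  using gen_sub' by blast

lemma gen_ideal:
  assumes M: "von_neumann_algebra sc ip R" and SR: "S \<subseteq> R"
  shows "left_ideal R (gen R S)"
proof -
  have add: "(\<lambda>x. A x + B x) \<in> gen R S" if "A \<in> gen R S" "B \<in> gen R S" for A B
    using that
  proof (induction rule: gen.induct)
    case gen0 thus ?case by simp
  next
    case (genS A s T)
    have "(\<lambda>x. A (s x) + (T x + B x)) \<in> gen R S"
      by (rule gen.genS[of A R s S "\<lambda>x. T x + B x"]) (use genS in auto)
    thus ?case by (simp add: add.assoc)
  qed
  have neg: "(\<lambda>x. - A x) \<in> gen R S" if "A \<in> gen R S" for A
    using that
  proof (induction rule: gen.induct)
    case gen0 thus ?case by (simp add: gen.gen0)
  next
    case (genS A s T)
    have "(\<lambda>y. - A y) \<in> R" using vna_neg[OF M genS(1)] .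
    hence "(\<lambda>x. (\<lambda>y. - A y) (s x) + (- T x)) \<in> gen R S"
      by (rule gen.genS[of "\<lambda>y. - A y" R s S "\<lambda>x. - T x"]) (use genS in auto)
    thus ?case by simp
  qed
  have mul: "C \<circ> B \<in> gen R S" if C: "C \<in> R" and "B \<in> gen R S" for C B
    using that(2)
  proof (induction rule: gen.induct)
    case gen0
    have eq: "C \<circ> (\<lambda>x. 0) = (\<lambda>x. 0)" using bop_zero[OF vna_bop[OF M C]] by (simp add: comp_def)
    show ?case unfolding eq by (rule gen.gen0)
  next
    case (genS A s T)
    have "(\<lambda>y. C (A y)) \<in> R" using vna_comp'[OF M C genS(1)] .
    moreover have "(\<lambda>x. C (T x)) \<in> gen R S" using genS.IH by (simp add: o_def)
    ultimately have "(\<lambda>x. (\<lambda>y. C (A y)) (s x) + C (T x)) \<in> gen R S"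
      using gen.genS[of "\<lambda>y. C (A y)" R s S "\<lambda>x. C (T x)"] genS(2) by simp
    thus ?case by (simp add: o_def bop_add[OF vna_bop[OF M C]])
  qed
  have S: "S \<subseteq> gen R S"
  proof
    fix s assume "s \<in> S"
    hence "(\<lambda>x. (\<lambda>y. y) (s x) + (\<lambda>x. 0) x) \<in> gen R S"
      by (rule gen.genS[OF vna_idl[OF M] _ gen.gen0])
    thus "s \<in> gen R S" by simp
  qed
  show ?thesis unfolding left_ideal_def
  proof (intro conjI ballI)
    show "gen R S \<subseteq> R" using gen_sub[OF M SR] .
    show "(\<lambda>x. 0) \<in> gen R S" by (rule gen.gen0)
    show "(\<lambda>x. A x + B x) \<in> gen R S" if "A \<in> gen R S" "B \<in> gen R S" for A B using add that .
    show "(\<lambda>x. - A x) \<in> gen R S" if "A \<in> gen R S" for A using neg that .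
    show "A \<circ> B \<in> gen R S" if "A \<in> R" "B \<in> gen R S" for A B using mul that .
  qed
qed

lemma gen_eq:
  assumes M: "von_neumann_algebra sc ip R" and SR: "S \<subseteq> R"
  shows "gen_left_ideal R S = gen R S"
proof
  have S: "S \<subseteq> gen R S"
  proof
    fix s assume "s \<in> S"
    hence "(\<lambda>x. (\<lambda>y. y) (s x) + (\<lambda>x. 0) x) \<in> gen R S"
      by (rule gen.genS[OF vna_idl[OF M] _ gen.gen0])
    thus "s \<in> gen R S" by simp
  qed
  show "gen_left_ideal R S \<subseteq> gen R S"
    unfolding gen_left_ideal_def using gen_ideal[OF M SR] S by blast
  show "gen R S \<subseteq> gen_left_ideal R S"
    unfolding gen_left_ideal_def using gen_le_ideal by blast
qed

lemma adj_unique: "is_adjoint ip A B1 \<Longrightarrow> is_adjoint ip A B2 \<Longrightarrow> B1 = B2"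
proof
  fix y assume h1: "is_adjoint ip A B1" and h2: "is_adjoint ip A B2"
  show "B1 y = B2 y"
  proof (rule ip_ext)
    fix z
    have "ip (B1 y) z = cnj (ip z (B1 y))" by (rule ip_sym)
    also have "\<dots> = cnj (ip (A z) y)" using h1 by (simp add: is_adjoint_def)
    also have "\<dots> = cnj (ip z (B2 y))" using h2 by (simp add: is_adjoint_def)
    also have "\<dots> = ip (B2 y) z" by (rule ip_sym[symmetric])
    finally show "ip (B1 y) z = ip (B2 y) z" .
  qed
qed

lemma wot_inter:
  assumes w1: "wot_closed sc ip R1" and w2: "wot_closed sc ip R2"
  shows "wot_closed sc ip (R1 \<inter> R2)"
proof -
  define ap where "ap M T = (\<forall>F::('a \<times> 'a) set. finite F \<longrightarrow>
             (\<forall>e>0. \<exists>A\<in>M. \<forall>(x, y)\<in>F. cmod (ip (T x) y - ip (A x) y) < e))" for M T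
  have wc: "wot_closed sc ip M = (\<forall>T. bop sc T \<and> ap M T \<longrightarrow> T \<in> M)" for M
    unfolding wot_closed_def ap_def by (rule refl)
  have mono: "ap M' T" if "ap M T" "M \<subseteq> M'" for M M' T
  proof -
    have "\<exists>A\<in>M'. \<forall>(x, y)\<in>F. cmod (ip (T x) y - ip (A x) y) < e" if "finite F" "e > 0" for F :: "('a \<times> 'a) set" and e
    proof -
      obtain A where "A \<in> M" "\<forall>(x, y)\<in>F. cmod (ip (T x) y - ip (A x) y) < e"
        using \<open>ap M T\<close> \<open>finite F\<close> \<open>e > 0\<close> unfolding ap_def by blast
      thus ?thesis using \<open>M \<subseteq> M'\<close> by blast
    qed
    thus ?thesis unfolding ap_def by blast
  qed
  show ?thesis unfolding wc
  proof (intro allI impI)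
    fix T assume h: "bop sc T \<and> ap (R1 \<inter> R2) T"
    have "T \<in> R1" using w1 h mono[of "R1 \<inter> R2" T R1] unfolding wc by blast
    moreover have "T \<in> R2" using w2 h mono[of "R1 \<inter> R2" T R2] unfolding wc by blast
    ultimately show "T \<in> R1 \<inter> R2" by blast
  qed
qed

lemma vna_inter:
  assumes M1: "von_neumann_algebra sc ip R1" and M2: "von_neumann_algebra sc ip R2"
  shows "von_neumann_algebra sc ip (R1 \<inter> R2)"
  unfolding von_neumann_algebra_def
proof (intro conjI ballI allI)
  show "bop sc T" if "T \<in> R1 \<inter> R2" for T using vna_bop[OF M1] that by blast
  show "id \<in> R1 \<inter> R2" using vna_id[OF M1] vna_id[OF M2] by blast
  show "(\<lambda>x. A x + B x) \<in> R1 \<inter> R2" if "A \<in> R1 \<inter> R2" "B \<in> R1 \<inter> R2" for A B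
    using vna_add[OF M1, of A B] vna_add[OF M2, of A B] that by blast
  show "(\<lambda>x. sc c (A x)) \<in> R1 \<inter> R2" if "A \<in> R1 \<inter> R2" for A c
    using vna_sc[OF M1, of A c] vna_sc[OF M2, of A c] that by blast
  show "A \<circ> B \<in> R1 \<inter> R2" if "A \<in> R1 \<inter> R2" "B \<in> R1 \<inter> R2" for A B
    using vna_comp[OF M1, of A B] vna_comp[OF M2, of A B] that by blast
  show "\<exists>B\<in>R1 \<inter> R2. is_adjoint ip A B" if A: "A \<in> R1 \<inter> R2" for A
  proof -
    obtain B1 where B1: "B1 \<in> R1" "is_adjoint ip A B1" using vna_adj[OF M1, of A] A by blast
    obtain B2 where B2: "B2 \<in> R2" "is_adjoint ip A B2" using vna_adj[OF M2, of A] A by blast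
    have "B1 = B2" using adj_unique B1(2) B2(2) by blast
    thus ?thesis using B1 B2 by blast
  qed
  show "wot_closed sc ip (R1 \<inter> R2)" by (rule wot_inter[OF vna_wot[OF M1] vna_wot[OF M2]])
qed

end


theorem corollary3p10:
  fixes sc :: "complex \<Rightarrow> 'a::banach \<Rightarrow> 'a" and ip :: "'a \<Rightarrow> 'a \<Rightarrow> complex"
    and R1 R2 S :: "('a \<Rightarrow> 'a) set"
  assumes "hilbert_space sc ip"
    and "von_neumann_algebra sc ip R1"
    and "von_neumann_algebra sc ip R2"
    and "S \<subseteq> R1 \<inter> R2"
  shows "gen_left_ideal R1 S \<inter> R2 = gen_left_ideal (R1 \<inter> R2) S"
proof -
  interpret hs sc ip by (unfold_locales) (rule assms(1))
  have M1: "von_neumann_algebra sc ip R1" by (rule assms(2))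
  have M: "von_neumann_algebra sc ip (R1 \<inter> R2)" by (rule vna_inter[OF assms(2) assms(3)])
  have S1: "S \<subseteq> R1" and SR: "S \<subseteq> R1 \<inter> R2" using assms(4) by auto
  have e1: "gen_left_ideal R1 S = gen R1 S" by (rule gen_eq[OF M1 S1])
  have e2: "gen_left_ideal (R1 \<inter> R2) S = gen (R1 \<inter> R2) S" by (rule gen_eq[OF M SR])
  show ?thesis unfolding e1 e2
  proof
    show "gen R1 S \<inter> R2 \<subseteq> gen (R1 \<inter> R2) S"
    proof
      fix T assume T: "T \<in> gen R1 S \<inter> R2"
      then obtain n :: nat and A s where h: "\<forall>i<n. A i \<in> R1 \<and> s i \<in> S"
        and Teq: "T = (\<lambda>x. \<Sum>i<n. A i (s i x))"
        using gen_to_sum[of T R1 S] by blast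
      have TR1: "T \<in> R1" using gen_sub[OF M1 S1] T by blast
      have TR: "T \<in> R1 \<inter> R2" using TR1 T by blast
      have sR: "\<And>i. i < n \<Longrightarrow> s i \<in> R1 \<inter> R2" using h SR by blast
      have "\<forall>i. \<exists>B. i < n \<longrightarrow> B \<in> R1 \<inter> R2 \<and> is_adjoint ip (s i) B"
        using vna_adj[OF M] sR by blast
      then obtain s' where s': "\<And>i. i < n \<longrightarrow> s' i \<in> R1 \<inter> R2 \<and> is_adjoint ip (s i) (s' i)"
        using choice[of "\<lambda>i B. i < n \<longrightarrow> B \<in> R1 \<inter> R2 \<and> is_adjoint ip (s i) B"] by blast
      have c: "ctx sc ip (R1 \<inter> R2) n s s' A"
        unfolding ctx_def ctx_axioms_def
      proof (intro conjI allI impI)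
        show "hs sc ip" by unfold_locales (rule assms(1))
        show "von_neumann_algebra sc ip (R1 \<inter> R2)" by (rule M)
        show "s i \<in> R1 \<inter> R2" if "i < n" for i using sR that .
        show "s' i \<in> R1 \<inter> R2" if "i < n" for i using s' that by blast
        show "is_adjoint ip (s i) (s' i)" if "i < n" for i using s' that by blast
        show "bop sc (A i)" if "i < n" for i using vna_bop[OF M1] h that by blast
        show "(\<lambda>x. \<Sum>i<n. A i (s i x)) \<in> R1 \<inter> R2" using TR Teq by simp
      qed
      interpret c: ctx sc ip "R1 \<inter> R2" n s s' A by (rule c)
      from c.main_exists obtain B where BB: "(\<forall>i<n. B i \<in> R1 \<inter> R2) \<and>
          (\<lambda>x. \<Sum>i<n. A i (s i x)) = (\<lambda>x. \<Sum>i<n. B i (s i x))" ..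
      have B: "\<forall>i<n. B i \<in> R1 \<inter> R2" using BB by (rule conjunct1)
      have eq: "(\<lambda>x. \<Sum>i<n. A i (s i x)) = (\<lambda>x. \<Sum>i<n. B i (s i x))" using BB by (rule conjunct2)
      have Bs: "\<forall>i<n. B i \<in> R1 \<inter> R2 \<and> s i \<in> S" using B h by blast
      have G: "(\<lambda>x. \<Sum>i<n. B i (s i x)) \<in> gen (R1 \<inter> R2) S" by (rule sum_in_gen[OF Bs])
      have TB: "T = (\<lambda>x. \<Sum>i<n. B i (s i x))" using Teq eq by (rule trans)
      show "T \<in> gen (R1 \<inter> R2) S" unfolding TB by (rule G)
    qed
    show "gen (R1 \<inter> R2) S \<subseteq> gen R1 S \<inter> R2"
      using gen_mono[of "R1 \<inter> R2" R1 _ S] gen_sub[OF M SR] by blast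
  qed
qed


end
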